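(* Let $G$ be a finitely generated group with an automorphism $f$ whose subgroup of fixed points is not finitely generated. Then for every integer $n\geq 1$, every $n$-configuration $c$ with $|c^{-1}(1)|\leq 1$ is realisable in $G^n$.
   Context: $G^n$ denotes the direct product of $n$ copies of $G$. Write $[n]=\{1,\dots,n\}$. An $n$-configuration is a map $c\colon \mathcal{P}([n])\setminus\{\emptyset\}\to\{0,1\}$. An $n$-configuration $c$ is realisable in a group $G$ if there exist subgroups $H_1,\dots,H_n\leq G$ such that for every non-empty subset $I\subseteq[n]$, the subgroup $\bigcap_{i\in I}H_i$ is finitely generated if and only if $c(I)=0$. *)

theory Defs
  imports "HOL-Algebra.Algebra"
begin

definition fin_gen :: "('a, 'b) monoid_scheme \<Rightarrow> 'a set \<Rightarrow> bool" where
  "fin_gen K H \<longleftrightarrow> (\<exists>S. finite S \<and> S \<subseteq> H \<and> generate K S = H)"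

definition power_group :: "('a, 'b) monoid_scheme \<Rightarrow> nat \<Rightarrow> (nat \<Rightarrow> 'a) monoid" where
  "power_group G n =
     \<lparr>carrier = PiE {1..n} (\<lambda>_. carrier G),
      monoid.mult = (\<lambda>x y. \<lambda>i\<in>{1..n}. x i \<otimes>\<^bsub>G\<^esub> y i),
      monoid.one = (\<lambda>i\<in>{1..n}. \<one>\<^bsub>G\<^esub>)\<rparr>"

definition configuration :: "nat \<Rightarrow> (nat set \<Rightarrow> nat) \<Rightarrow> bool" where
  "configuration n c \<longleftrightarrow> (\<forall>I. I \<subseteq> {1..n} \<and> I \<noteq> {} \<longrightarrow> c I \<in> {0, 1})"

definition realisable :: "nat \<Rightarrow> (nat set \<Rightarrow> nat) \<Rightarrow> ('a, 'b) monoid_scheme \<Rightarrow> bool" where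
  "realisable n c K \<longleftrightarrow>
     (\<exists>H :: nat \<Rightarrow> 'a set. (\<forall>i\<in>{1..n}. subgroup (H i) K) \<and>
        (\<forall>I. I \<subseteq> {1..n} \<and> I \<noteq> {} \<longrightarrow> (fin_gen K (\<Inter>i\<in>I. H i) \<longleftrightarrow> c I = 0)))"

end

theory Submission
  imports Defs
begin

lemma pg_carrier: "carrier (power_group G n) = PiE {1..n} (\<lambda>_. carrier G)"
  by (simp add: power_group_def)
lemma pg_mult: "x \<otimes>\<^bsub>power_group G n\<^esub> y = (\<lambda>i\<in>{1..n}. x i \<otimes>\<^bsub>G\<^esub> y i)"
  by (simp add: power_group_def)
lemma pg_one: "\<one>\<^bsub>power_group G n\<^esub> = (\<lambda>i\<in>{1..n}. \<one>\<^bsub>G\<^esub>)"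
  by (simp add: power_group_def)

lemma pg_group:
  assumes "group G" shows "group (power_group G n)"
proof -
  interpret G: group G by fact
  show ?thesis
  proof (rule groupI)
    fix x y assume "x \<in> carrier (power_group G n)" "y \<in> carrier (power_group G n)"
    then show "x \<otimes>\<^bsub>power_group G n\<^esub> y \<in> carrier (power_group G n)"
      by (auto simp: pg_carrier pg_mult PiE_iff)
  next
    show "\<one>\<^bsub>power_group G n\<^esub> \<in> carrier (power_group G n)"
      by (auto simp: pg_carrier pg_one)
  next
    fix x y z assume "x \<in> carrier (power_group G n)" "y \<in> carrier (power_group G n)" "z \<in> carrier (power_group G n)"
    then show "x \<otimes>\<^bsub>power_group G n\<^esub> y \<otimes>\<^bsub>power_group G n\<^esub> z =
          x \<otimes>\<^bsub>power_group G n\<^esub> (y \<otimes>\<^bsub>power_group G n\<^esub> z)"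
      by (auto simp: pg_carrier pg_mult PiE_iff G.m_assoc intro!: ext)
  next
    fix x assume "x \<in> carrier (power_group G n)"
    then show "\<one>\<^bsub>power_group G n\<^esub> \<otimes>\<^bsub>power_group G n\<^esub> x = x"
      by (auto simp: pg_carrier pg_mult pg_one PiE_iff extensional_def intro!: ext)
  next
    fix x assume x: "x \<in> carrier (power_group G n)"
    show "\<exists>y\<in>carrier (power_group G n). y \<otimes>\<^bsub>power_group G n\<^esub> x = \<one>\<^bsub>power_group G n\<^esub>"
      by (rule bexI[of _ "\<lambda>i\<in>{1..n}. inv\<^bsub>G\<^esub> x i"]) (use x in \<open>auto simp: pg_carrier pg_mult pg_one PiE_iff\<close>)
  qed
qed

lemma pg_inv:
  assumes "group G" "x \<in> carrier (power_group G n)"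
  shows "inv\<^bsub>power_group G n\<^esub> x = (\<lambda>i\<in>{1..n}. inv\<^bsub>G\<^esub> x i)"
proof -
  interpret G: group G by fact
  interpret P: group "power_group G n" using pg_group[OF assms(1)] .
  show ?thesis
    by (rule P.inv_equality) (use assms(2) in \<open>auto simp: pg_carrier pg_mult pg_one PiE_iff\<close>)
qed

lemma fin_gen_img:
  assumes "group K" "group L" "h \<in> hom K L" "fin_gen K A" "A \<subseteq> carrier K"
  shows "fin_gen L (h ` A)"
proof -
  obtain S where S: "finite S" "S \<subseteq> A" "generate K S = A" using assms(4) by (auto simp: fin_gen_def)
  interpret group_hom K L h using assms by (simp add: group_hom_def group_hom_axioms_def)
  have "generate L (h ` S) = h ` A" using generate_img[of S] S assms(5) by auto
  then show ?thesis unfolding fin_gen_def using S by (intro exI[of _ "h ` S"]) auto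
qed

definition ej :: "('a,'b) monoid_scheme \<Rightarrow> nat \<Rightarrow> nat \<Rightarrow> 'a \<Rightarrow> nat \<Rightarrow> 'a" where
  "ej G n j s = (\<lambda>i\<in>{1..n}. if i = j then s else \<one>\<^bsub>G\<^esub>)"

lemma ej_hom: assumes "group G" shows "ej G n j \<in> hom G (power_group G n)"
proof -
  interpret G: group G by fact
  show ?thesis
    by (auto simp: hom_def ej_def pg_carrier pg_mult intro!: ext)
qed

lemma pg_fin_gen:
  assumes "group G" "fin_gen G (carrier G)"
  shows "fin_gen (power_group G n) (carrier (power_group G n))"
proof -
  interpret G: group G by fact
  interpret P: group "power_group G n" using pg_group[OF assms(1)] .
  obtain S where S: "finite S" "S \<subseteq> carrier G" "generate G S = carrier G"
    using assms(2) by (auto simp: fin_gen_def)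
  define S' where "S' = (\<Union>j\<in>{1..n}. ej G n j ` S)"
  have S'c: "S' \<subseteq> carrier (power_group G n)"
    using S(2) ej_hom[OF assms(1)] by (auto simp: S'_def hom_def Pi_def)
  have ejin: "ej G n j a \<in> generate (power_group G n) S'" if "j \<in> {1..n}" "a \<in> carrier G" for j a
  proof -
    interpret group_hom G "power_group G n" "ej G n j"
      using ej_hom[OF assms(1)] by (simp add: group_hom_def group_hom_axioms_def assms(1) P.is_group)
    have "ej G n j a \<in> ej G n j ` generate G S" using that S(3) by auto
    also have "\<dots> = generate (power_group G n) (ej G n j ` S)" using generate_img[OF S(2)] by simp
    also have "\<dots> \<subseteq> generate (power_group G n) S'"
      by (rule P.mono_generate) (use that in \<open>auto simp: S'_def\<close>)
    finally show ?thesis .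
  qed
  have main: "\<And>x. x \<in> carrier (power_group G n) \<Longrightarrow> (\<forall>i\<in>{1..n}. i > m \<longrightarrow> x i = \<one>\<^bsub>G\<^esub>)
     \<Longrightarrow> x \<in> generate (power_group G n) S'" for m
  proof (induction m)
    case 0
    then have "x = \<one>\<^bsub>power_group G n\<^esub>"
      by (auto simp: pg_carrier pg_one PiE_iff extensional_def intro!: ext)
    then show ?case using generate.one by metis
  next
    case (Suc m)
    define x' where "x' = (\<lambda>i\<in>{1..n}. if i = Suc m then \<one>\<^bsub>G\<^esub> else x i)"
    have x'c: "x' \<in> carrier (power_group G n)" using Suc.prems by (auto simp: x'_def pg_carrier PiE_iff)
    have "x' \<in> generate (power_group G n) S'"
      by (rule Suc.IH[OF x'c]) (use Suc.prems in \<open>auto simp: x'_def\<close>)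
    moreover have "ej G n (Suc m) (x (Suc m)) \<in> generate (power_group G n) S'"
    proof (cases "Suc m \<in> {1..n}")
      case True then show ?thesis using ejin Suc.prems by (auto simp: pg_carrier PiE_iff)
    next
      case False
      then have "ej G n (Suc m) (x (Suc m)) = \<one>\<^bsub>power_group G n\<^esub>"
        by (auto simp: ej_def pg_one intro!: ext)
      then show ?thesis using generate.one by metis
    qed
    moreover have "x = x' \<otimes>\<^bsub>power_group G n\<^esub> ej G n (Suc m) (x (Suc m))"
      using Suc.prems by (auto simp: x'_def ej_def pg_mult pg_carrier PiE_iff extensional_def intro!: ext)
    ultimately show ?case using generate.eng by metis
  qed
  have "generate (power_group G n) S' = carrier (power_group G n)"
  proof
    show "generate (power_group G n) S' \<subseteq> carrier (power_group G n)" by (rule P.generate_incl[OF S'c])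
    show "carrier (power_group G n) \<subseteq> generate (power_group G n) S'"
      using main[of _ n] by auto
  qed
  moreover have "finite S'" using S(1) by (auto simp: S'_def)
  ultimately show ?thesis unfolding fin_gen_def using S'c by blast
qed


definition cycK :: "('a,'b) monoid_scheme \<Rightarrow> ('a\<Rightarrow>'a) \<Rightarrow> nat \<Rightarrow> nat \<Rightarrow> nat set \<Rightarrow> (nat\<Rightarrow>'a) set" where
 "cycK G f n k T = {x \<in> carrier (power_group G n). (\<forall>j\<in>{1..n}. k < j \<longrightarrow> x j = \<one>\<^bsub>G\<^esub>) \<and>
     (\<forall>p\<in>T. x p = (if p = k then f (x 1) else x (Suc p)))}"

lemma chain:
  assumes "\<forall>t\<in>T. t < k \<longrightarrow> x t = x (Suc t)"
  shows "j + d \<le> k \<Longrightarrow> {j..<j+d} \<subseteq> T \<Longrightarrow> x j = x (j+d)"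
proof (induction d)
  case 0 then show ?case by simp
next
  case (Suc d)
  have "{j..<j+d} \<subseteq> T" using Suc.prems by auto
  then have "x j = x (j+d)" using Suc.IH Suc.prems by simp
  moreover have "j + d \<in> T" using Suc.prems by auto
  ultimately show ?case using assms Suc.prems by auto
qed

lemma chain':
  assumes "\<forall>t\<in>T. t < k \<longrightarrow> x t = x (Suc t)" "j \<le> m" "m \<le> k" "{j..<m} \<subseteq> T"
  shows "x j = x m"
  using chain[OF assms(1), of j "m - j"] assms(2-4) by auto

lemma cycK_subgroup:
  assumes "group G" "f \<in> hom G G" "k \<le> n" "T \<subseteq> {1..k}"
  shows "subgroup (cycK G f n k T) (power_group G n)"
proof -
  interpret G: group G by fact
  interpret P: group "power_group G n" using pg_group[OF assms(1)] .
  interpret h: group_hom G G f using assms(1,2) by (simp add: group_hom_def group_hom_axioms_def)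
  show ?thesis
  proof (rule P.subgroupI)
    show "cycK G f n k T \<subseteq> carrier (power_group G n)" by (auto simp: cycK_def)
    have "\<one>\<^bsub>power_group G n\<^esub> \<in> cycK G f n k T"
      unfolding cycK_def using P.one_closed assms(3,4) by (auto simp: pg_one)
    then show "cycK G f n k T \<noteq> {}" by blast
  next
    fix a assume a: "a \<in> cycK G f n k T"
    then have ac: "a \<in> carrier (power_group G n)" by (auto simp: cycK_def)
    show "inv\<^bsub>power_group G n\<^esub> a \<in> cycK G f n k T"
      unfolding pg_inv[OF assms(1) ac] cycK_def
    proof (intro CollectI conjI ballI impI)
      show "(\<lambda>i\<in>{1..n}. inv\<^bsub>G\<^esub> a i) \<in> carrier (power_group G n)"
        using ac by (auto simp: pg_carrier PiE_iff)
      show "(\<lambda>i\<in>{1..n}. inv\<^bsub>G\<^esub> a i) j = \<one>\<^bsub>G\<^esub>" if "j \<in> {1..n}" "k < j" for j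
        using a that by (auto simp: cycK_def)
      fix p assume p: "p \<in> T"
      then have p1: "1 \<le> p" "p \<le> k" using assms(4) by auto
      have a1: "a 1 \<in> carrier G" using ac p1 assms(3) by (auto simp: pg_carrier PiE_iff)
      show "(\<lambda>i\<in>{1..n}. inv\<^bsub>G\<^esub> a i) p = (if p = k then f ((\<lambda>i\<in>{1..n}. inv\<^bsub>G\<^esub> a i) 1)
               else (\<lambda>i\<in>{1..n}. inv\<^bsub>G\<^esub> a i) (Suc p))"
        using a p p1 a1 assms(3) by (auto simp: cycK_def h.hom_inv)
    qed
  next
    fix a b assume a: "a \<in> cycK G f n k T" and b: "b \<in> cycK G f n k T"
    then have ac: "a \<in> carrier (power_group G n)" and bc: "b \<in> carrier (power_group G n)" by (auto simp: cycK_def)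
    show "a \<otimes>\<^bsub>power_group G n\<^esub> b \<in> cycK G f n k T"
      unfolding pg_mult cycK_def
    proof (intro CollectI conjI ballI impI)
      show "(\<lambda>i\<in>{1..n}. a i \<otimes>\<^bsub>G\<^esub> b i) \<in> carrier (power_group G n)"
        using ac bc by (auto simp: pg_carrier PiE_iff)
      show "(\<lambda>i\<in>{1..n}. a i \<otimes>\<^bsub>G\<^esub> b i) j = \<one>\<^bsub>G\<^esub>" if "j \<in> {1..n}" "k < j" for j
        using a b that by (auto simp: cycK_def)
      fix p assume p: "p \<in> T"
      then have p1: "1 \<le> p" "p \<le> k" using assms(4) by auto
      have a1: "a 1 \<in> carrier G" "b 1 \<in> carrier G" using ac bc p1 assms(3) by (auto simp: pg_carrier PiE_iff)
      show "(\<lambda>i\<in>{1..n}. a i \<otimes>\<^bsub>G\<^esub> b i) p = (if p = k then f ((\<lambda>i\<in>{1..n}. a i \<otimes>\<^bsub>G\<^esub> b i) 1)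
               else (\<lambda>i\<in>{1..n}. a i \<otimes>\<^bsub>G\<^esub> b i) (Suc p))"
        using a b p p1 a1 assms(3) by (auto simp: cycK_def)
    qed
  qed
qed

lemma cycK_Inter:
  assumes "I \<noteq> {}"
  shows "(\<Inter>i\<in>I. cycK G f n k {r i}) = cycK G f n k (r ` I)"
  using assms by (auto simp: cycK_def)

lemma cycK_full_not_fg:
  assumes "group G" "f \<in> hom G G" "1 \<le> k" "k \<le> n" "\<not> fin_gen G {x \<in> carrier G. f x = x}"
  shows "\<not> fin_gen (power_group G n) (cycK G f n k {1..k})"
proof
  assume fg: "fin_gen (power_group G n) (cycK G f n k {1..k})"
  interpret G: group G by fact
  interpret P: group "power_group G n" using pg_group[OF assms(1)] .
  have hom: "(\<lambda>x. x 1) \<in> hom (power_group G n) G"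
    using assms(3,4) by (auto simp: hom_def pg_carrier pg_mult PiE_iff)
  have "(\<lambda>x. x 1) ` cycK G f n k {1..k} = {x \<in> carrier G. f x = x}"
  proof
    show "(\<lambda>x. x 1) ` cycK G f n k {1..k} \<subseteq> {x \<in> carrier G. f x = x}"
    proof clarify
      fix x assume x: "x \<in> cycK G f n k {1..k}"
      then have xc: "x \<in> carrier (power_group G n)" by (auto simp: cycK_def)
      have ch: "\<forall>t\<in>{1..k}. t < k \<longrightarrow> x t = x (Suc t)" using x by (auto simp: cycK_def)
      have "x 1 = x k" by (rule chain'[OF ch]) (use assms in auto)
      moreover have "x k = f (x 1)" using x assms(3) by (auto simp: cycK_def)
      ultimately show "x 1 \<in> carrier G \<and> f (x 1) = x 1"
        using xc assms(3,4) by (auto simp: pg_carrier PiE_iff)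
    qed
    show "{x \<in> carrier G. f x = x} \<subseteq> (\<lambda>x. x 1) ` cycK G f n k {1..k}"
    proof clarify
      fix a assume a: "a \<in> carrier G" "f a = a"
      define x where "x = (\<lambda>j\<in>{1..n}. if j \<le> k then a else \<one>\<^bsub>G\<^esub>)"
      have "x \<in> cycK G f n k {1..k}"
        using a assms(3,4) by (auto simp: x_def cycK_def pg_carrier)
      moreover have "x 1 = a" using assms(3,4) by (simp add: x_def)
      ultimately show "a \<in> (\<lambda>x. x 1) ` cycK G f n k {1..k}" by force
    qed
  qed
  moreover have "fin_gen G ((\<lambda>x. x 1) ` cycK G f n k {1..k})"
    by (rule fin_gen_img[OF P.is_group assms(1) hom fg]) (auto simp: cycK_def)
  ultimately show False using assms(5) by simp
qed


definition wr :: "nat set \<Rightarrow> nat \<Rightarrow> nat \<Rightarrow> bool" where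
  "wr T k j = (\<forall>m. j \<le> m \<and> m \<le> k \<longrightarrow> m \<in> T)"
definition src :: "nat set \<Rightarrow> nat \<Rightarrow> nat \<Rightarrow> nat" where
  "src T k j = (if wr T k j then LEAST m. 1 \<le> m \<and> m \<le> k \<and> m \<notin> T
                else LEAST m. j \<le> m \<and> m \<le> k \<and> m \<notin> T)"

lemma src_props:
  assumes "T \<subseteq> {1..k}" "T \<noteq> {1..k}" "1 \<le> j"
  shows "1 \<le> src T k j \<and> src T k j \<le> k \<and> src T k j \<notin> T \<and>
    (\<not> wr T k j \<longrightarrow> j \<le> src T k j \<and> {j..<src T k j} \<subseteq> T) \<and>
    (wr T k j \<longrightarrow> {1..<src T k j} \<subseteq> T)"
proof (cases "wr T k j")
  case True
  define P where "P = (\<lambda>m. 1 \<le> m \<and> m \<le> k \<and> m \<notin> T)"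
  have ex1: "\<exists>m. P m" using assms(1,2) unfolding P_def by auto
  have s: "src T k j = Least P" using True by (simp add: src_def P_def)
  have A: "P (Least P)" using LeastI_ex[OF ex1] .
  have B: "t \<in> T" if "1 \<le> t" "t < Least P" for t
  proof -
    have "\<not> P t" using not_less_Least[OF that(2)] .
    then show ?thesis using that A unfolding P_def by auto
  qed
  show ?thesis using A B True unfolding s P_def by auto
next
  case False
  define P where "P = (\<lambda>m. j \<le> m \<and> m \<le> k \<and> m \<notin> T)"
  have ex1: "\<exists>m. P m" using False unfolding P_def wr_def by auto
  have s: "src T k j = Least P" using False by (simp add: src_def P_def)
  have A: "P (Least P)" using LeastI_ex[OF ex1] .
  have B: "t \<in> T" if "j \<le> t" "t < Least P" for t
  proof -
    have "\<not> P t" using not_less_Least[OF that(2)] .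
    then show ?thesis using that A unfolding P_def by auto
  qed
  show ?thesis using A B False assms(3) unfolding s P_def by auto
qed

lemma cycK_proper_fg:
  assumes "group G" "fin_gen G (carrier G)" "f \<in> hom G G" "k \<le> n" "T \<subseteq> {1..k}" "T \<noteq> {1..k}"
  shows "fin_gen (power_group G n) (cycK G f n k T)"
proof -
  interpret G: group G by fact
  interpret P: group "power_group G n" using pg_group[OF assms(1)] .
  interpret h: group_hom G G f using assms(1,3) by (simp add: group_hom_def group_hom_axioms_def)
  define phi where "phi = (\<lambda>y. \<lambda>j\<in>{1..n}. if j \<le> k then (if wr T k j then f (y (src T k j)) else y (src T k j)) else \<one>\<^bsub>G\<^esub>)"
  have srcin: "src T k j \<in> {1..n}" if "1 \<le> j" for j
    using src_props[OF assms(5,6) that] assms(4) by simp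
  have hom: "phi \<in> hom (power_group G n) (power_group G n)"
  proof (rule homI)
    fix x assume x: "x \<in> carrier (power_group G n)"
    show "phi x \<in> carrier (power_group G n)"
      using x srcin by (auto simp: phi_def pg_carrier PiE_iff)
  next
    fix x y assume x: "x \<in> carrier (power_group G n)" and y: "y \<in> carrier (power_group G n)"
    show "phi (x \<otimes>\<^bsub>power_group G n\<^esub> y) = phi x \<otimes>\<^bsub>power_group G n\<^esub> phi y"
    proof (rule ext)
      fix j
      show "phi (x \<otimes>\<^bsub>power_group G n\<^esub> y) j = (phi x \<otimes>\<^bsub>power_group G n\<^esub> phi y) j"
      proof (cases "j \<in> {1..n} \<and> j \<le> k")
        case True
        then have sj: "src T k j \<in> {1..n}" using srcin by auto
        have c: "x (src T k j) \<in> carrier G" "y (src T k j) \<in> carrier G"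
          using sj x y by (auto simp: pg_carrier PiE_iff)
        show ?thesis using True sj c by (simp add: phi_def pg_mult)
      next
        case False
        then show ?thesis by (auto simp: phi_def pg_mult)
      qed
    qed
  qed
  have img: "phi ` carrier (power_group G n) = cycK G f n k T"
  proof
    show "phi ` carrier (power_group G n) \<subseteq> cycK G f n k T"
    proof clarify
      fix y assume y: "y \<in> carrier (power_group G n)"
      have yc: "phi y \<in> carrier (power_group G n)" using hom y by (auto simp: hom_def)
      show "phi y \<in> cycK G f n k T"
        unfolding cycK_def
      proof (intro CollectI conjI ballI impI yc)
        show "phi y j = \<one>\<^bsub>G\<^esub>" if "j \<in> {1..n}" "k < j" for j using that by (simp add: phi_def)
        fix p assume p: "p \<in> T"
        then have p1: "1 \<le> p" "p \<le> k" using assms(5) by auto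
        show "phi y p = (if p = k then f (phi y 1) else phi y (Suc p))"
        proof (cases "p = k")
          case True
          have w: "wr T k k" using p True by (auto simp: wr_def)
          have nw: "\<not> wr T k 1" using assms(5,6) by (auto simp: wr_def)
          have "src T k k = src T k 1" using w nw by (simp add: src_def)
          then show ?thesis using True w nw p1 assms(4) by (simp add: phi_def)
        next
          case False
          have eqv: "(p \<le> m \<and> m \<le> k \<and> m \<notin> T) = (Suc p \<le> m \<and> m \<le> k \<and> m \<notin> T)" for m
            using p by (auto simp: le_eq_less_or_eq)
          have w: "wr T k p = wr T k (Suc p)" using eqv by (auto simp: wr_def)
          have s: "src T k p = src T k (Suc p)" using eqv w by (simp add: src_def)
          show ?thesis using False w s p1 assms(4) by (simp add: phi_def)
        qed
      qed
    qed
    show "cycK G f n k T \<subseteq> phi ` carrier (power_group G n)"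
    proof
      fix x assume x: "x \<in> cycK G f n k T"
      then have xc: "x \<in> carrier (power_group G n)" by (auto simp: cycK_def)
      have ch: "\<forall>t\<in>T. t < k \<longrightarrow> x t = x (Suc t)" using x by (auto simp: cycK_def)
      have "x = phi x"
      proof (rule ext)
        fix j show "x j = phi x j"
        proof (cases "j \<in> {1..n}")
          case False then show ?thesis using xc by (auto simp: phi_def pg_carrier PiE_def extensional_def)
        next
          case True
          have sp: "1 \<le> src T k j \<and> src T k j \<le> k \<and> src T k j \<notin> T \<and>
            (\<not> wr T k j \<longrightarrow> j \<le> src T k j \<and> {j..<src T k j} \<subseteq> T) \<and>
            (wr T k j \<longrightarrow> {1..<src T k j} \<subseteq> T)"
            using src_props[OF assms(5,6), of j] True by simp
          show ?thesis
          proof (cases "j \<le> k")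
            case False then show ?thesis using x True by (auto simp: phi_def cycK_def)
          next
            case jk: True
            show ?thesis
            proof (cases "wr T k j")
              case False
              have "x j = x (src T k j)"
                by (rule chain'[OF ch]) (use sp False in blast)+
              then show ?thesis using False True jk by (simp add: phi_def)
            next
              case w: True
              have kT: "k \<in> T" using w jk by (auto simp: wr_def)
              have "x j = x k"
                by (rule chain'[OF ch]) (use w jk in \<open>auto simp: wr_def\<close>)
              also have "\<dots> = f (x 1)" using x kT by (auto simp: cycK_def)
              also have "x 1 = x (src T k j)"
                by (rule chain'[OF ch]) (use sp w in blast)+
              finally show ?thesis using w True jk by (simp add: phi_def)
            qed
          qed
        qed
      qed
      then show "x \<in> phi ` carrier (power_group G n)" using xc by blast
    qed
  qed
  show ?thesis
    using fin_gen_img[OF P.is_group P.is_group hom pg_fin_gen[OF assms(1,2)]] img by simp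
qed


theorem lemma2p5:
  fixes G :: "('a, 'b) monoid_scheme" and f :: "'a \<Rightarrow> 'a"
  assumes "group G"
    and "fin_gen G (carrier G)"
    and "f \<in> iso G G"
    and "\<not> fin_gen G {x \<in> carrier G. f x = x}"
  shows "\<forall>n::nat. n \<ge> 1 \<longrightarrow> (\<forall>c. configuration n c \<and>
           card {I. I \<subseteq> {1..n} \<and> I \<noteq> {} \<and> c I = 1} \<le> 1 \<longrightarrow>
           realisable n c (power_group G n))"
proof (intro allI impI)
  interpret G: group G by fact
  have fh: "f \<in> hom G G" using assms(3) by (simp add: iso_def)
  fix n :: nat and c
  assume n1: "n \<ge> 1" and cc: "configuration n c \<and> card {I. I \<subseteq> {1..n} \<and> I \<noteq> {} \<and> c I = 1} \<le> 1"
  interpret P: group "power_group G n" using pg_group[OF assms(1)] .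
  define A where "A = {I. I \<subseteq> {1..n} \<and> I \<noteq> {} \<and> c I = 1}"
  have "A \<subseteq> Pow {1..n}" unfolding A_def by blast
  then have finA: "finite A" by (rule finite_subset) simp
  have cardA: "card A \<le> Suc 0" using cc by (simp add: A_def)
  have one_fg: "fin_gen (power_group G n) {\<one>\<^bsub>power_group G n\<^esub>}"
    unfolding fin_gen_def by (intro exI[of _ "{}"]) (simp add: P.generate_empty)
  have c01: "c I = 0 \<longleftrightarrow> c I \<noteq> 1" if "I \<subseteq> {1..n}" "I \<noteq> {}" for I
  proof -
    have "c I \<in> {0, 1}" using cc that unfolding configuration_def by blast
    then show ?thesis by auto
  qed
  have Ai: "I \<in> A \<longleftrightarrow> c I = 1" if "I \<subseteq> {1..n}" "I \<noteq> {}" for I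
    using that by (auto simp: A_def)
  have uA: "\<forall>a\<in>A. \<forall>b\<in>A. a = b" using card_le_Suc0_iff_eq[OF finA] cardA by simp
  have "A = {} \<or> (\<exists>I0. A = {I0})"
  proof (cases "A = {}")
    case False
    then obtain I0 where "I0 \<in> A" by blast
    then have "A = {I0}" using uA by blast
    then show ?thesis by blast
  qed simp
  then show "realisable n c (power_group G n)"
  proof
    assume A0: "A = {}"
    show ?thesis unfolding realisable_def
    proof (intro exI[of _ "\<lambda>i. {\<one>\<^bsub>power_group G n\<^esub>}"] conjI allI ballI impI)
      show "subgroup {\<one>\<^bsub>power_group G n\<^esub>} (power_group G n)" for i by (rule P.triv_subgroup)
      fix I assume I: "I \<subseteq> {1..n} \<and> I \<noteq> {}"
      have eq0: "(\<Inter>i\<in>I. {\<one>\<^bsub>power_group G n\<^esub>}) = {\<one>\<^bsub>power_group G n\<^esub>}" using I by auto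
      have "c I = 0" using I Ai[of I] c01[of I] A0 by auto
      then show "fin_gen (power_group G n) (\<Inter>i\<in>I. {\<one>\<^bsub>power_group G n\<^esub>}) = (c I = 0)"
        unfolding eq0 using one_fg by simp
    qed
  next
    assume "\<exists>I0. A = {I0}"
    then obtain I0 where AI0: "A = {I0}" by blast
    then have I0: "I0 \<subseteq> {1..n}" "I0 \<noteq> {}" "c I0 = 1" by (auto simp: A_def)
    define k where "k = card I0"
    have finI0: "finite I0" using I0(1) by (rule finite_subset) simp
    have k1: "1 \<le> k" using finI0 I0(2) by (simp add: k_def Suc_le_eq card_gt_0_iff)
    have kn: "k \<le> n" using card_mono[OF _ I0(1)] by (simp add: k_def)
    have "\<exists>r. bij_betw r I0 {1..k}"
      by (rule finite_same_card_bij) (simp_all add: finI0 k_def)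
    then obtain r where r: "bij_betw r I0 {1..k}" by blast
    have rin: "r i \<in> {1..k}" if "i \<in> I0" for i using r that by (auto simp: bij_betw_def)
    define H where "H = (\<lambda>i. if i \<in> I0 then cycK G f n k {r i} else {\<one>\<^bsub>power_group G n\<^esub>})"
    show ?thesis unfolding realisable_def
    proof (intro exI[of _ H] conjI allI ballI impI)
      show sg: "subgroup (H i) (power_group G n)" for i
        using cycK_subgroup[OF assms(1) fh kn, of "{r i}"] rin[of i] P.triv_subgroup
        by (auto simp: H_def)
      fix I assume I: "I \<subseteq> {1..n} \<and> I \<noteq> {}"
      show "fin_gen (power_group G n) (\<Inter>i\<in>I. H i) = (c I = 0)"
      proof (cases "I \<subseteq> I0")
        case True
        have "(\<Inter>i\<in>I. H i) = (\<Inter>i\<in>I. cycK G f n k {r i})"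
          by (rule INF_cong[OF refl]) (use True in \<open>auto simp: H_def\<close>)
        also have "\<dots> = cycK G f n k (r ` I)" by (rule cycK_Inter) (use I in simp)
        finally have eq: "(\<Inter>i\<in>I. H i) = cycK G f n k (r ` I)" .
        have rI: "r ` I \<subseteq> {1..k}" using True rin by auto
        have riff: "r ` I = {1..k} \<longleftrightarrow> I = I0"
        proof -
          have "r ` I0 = {1..k}" using r by (simp add: bij_betw_def)
          moreover have "inj_on r I0" using r by (simp add: bij_betw_def)
          ultimately show ?thesis using True inj_on_image_eq_iff[of r I0 I I0] by auto
        qed
        have ciff: "c I = 0 \<longleftrightarrow> I \<noteq> I0" using c01[of I] Ai[of I] I AI0 by auto
        show ?thesis
        proof (cases "I = I0")
          case True
          then show ?thesis using eq riff ciff cycK_full_not_fg[OF assms(1) fh k1 kn assms(4)] by simp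
        next
          case False
          then show ?thesis using eq riff ciff cycK_proper_fg[OF assms(1,2) fh kn rI] by simp
        qed
      next
        case False
        then obtain i where i: "i \<in> I" "i \<notin> I0" by blast
        have eqo: "(\<Inter>i\<in>I. H i) = {\<one>\<^bsub>power_group G n\<^esub>}"
        proof
          show "(\<Inter>i\<in>I. H i) \<subseteq> {\<one>\<^bsub>power_group G n\<^esub>}" using i by (auto simp: H_def)
          show "{\<one>\<^bsub>power_group G n\<^esub>} \<subseteq> (\<Inter>i\<in>I. H i)" using sg subgroup.one_closed by blast
        qed
        have "c I = 0" using c01[of I] Ai[of I] I AI0 False by auto
        then show ?thesis unfolding eqo using one_fg by simp
      qed
    qed
  qed
qed

end
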